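(* Let $\mathcal{A}$ be a separating union-closed family with base set $[n]$ and height $h=4$, and let $\mathcal{B}=\{B_1,B_2,B_3,B_4\}$ be a choice of $\mathcal{B}(\mathcal{A})$ with $|\mathcal{B}|=4$. Then $|\mathrm{irr}_{\mathcal{B}}(B_i)|=1$ for each $i \in \{1,2,3,4\}$.
   Context: A family of sets $\mathcal{A}$ is union-closed if it is a finite family of distinct finite sets with at least one nonempty member set, and $X,Y\in\mathcal{A}$ implies $X\cup Y\in\mathcal{A}$ (the empty set may be a member). For a family $\mathcal{F}$, $b(\mathcal{F})=\bigcup_{F\in\mathcal{F}}F$; the base set $b(\mathcal{A})$ is denoted $[n]=\{1,\dots,n\}$. $\mathcal{A}$ is separating if for any two distinct $x,y\in[n]$ there is $A\in\mathcal{A}$ containing exactly one of $x,y$. A chain in $\mathcal{A}$ is a subfamily any two distinct members of which are comparable under proper inclusion; the height $h$ of $\mathcal{A}$ is the maximum size of a chain in $\mathcal{A}$. For real $x\ge 0$, $\mathcal{A}_{<x}=\{A\in\mathcal{A} : |A|<x\}$. For $\mathcal{S}\subseteq\mathcal{A}$ and $S\in\mathcal{S}$, $\mathrm{irr}_{\mathcal{S}}(S)=\{s\in S : s\notin b(\mathcal{S}\setminus\{S\})\}$, and $\mathcal{S}$ is irredundant if $\mathrm{irr}_{\mathcal{S}}(S)\neq\emptyset$ for every $S\in\mathcal{S}$. With $B=b(\mathcal{A}_{<n/2})$, $\mathcal{B}(\mathcal{A})$ denotes any irredundant subfamily of $\mathcal{A}_{<n/2}$ of minimum size such that $b(\mathcal{B}(\mathcal{A}))=B$.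 *)

theory Defs
  imports Complex_Main
begin

definition union_closed :: "'a set set \<Rightarrow> bool" where
  "union_closed \<A> \<longleftrightarrow> finite \<A> \<and> (\<forall>X\<in>\<A>. finite X) \<and> (\<exists>X\<in>\<A>. X \<noteq> {}) \<and>
     (\<forall>X\<in>\<A>. \<forall>Y\<in>\<A>. X \<union> Y \<in> \<A>)"

definition separating :: "'a set set \<Rightarrow> bool" where
  "separating \<A> \<longleftrightarrow> (\<forall>x\<in>\<Union>\<A>. \<forall>y\<in>\<Union>\<A>. x \<noteq> y \<longrightarrow>
     (\<exists>A\<in>\<A>. (x \<in> A \<and> y \<notin> A) \<or> (y \<in> A \<and> x \<notin> A)))"

definition is_chain :: "'a set set \<Rightarrow> bool" where
  "is_chain \<C> \<longleftrightarrow> (\<forall>X\<in>\<C>. \<forall>Y\<in>\<C>. X \<noteq> Y \<longrightarrow> X \<subset> Y \<or> Y \<subset> X)"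

definition height :: "'a set set \<Rightarrow> nat" where
  "height \<A> = Max (card ` {\<C>. \<C> \<subseteq> \<A> \<and> is_chain \<C>})"

definition small_members :: "'a set set \<Rightarrow> real \<Rightarrow> 'a set set" where
  "small_members \<A> x = {A\<in>\<A>. real (card A) < x}"

definition irr :: "'a set set \<Rightarrow> 'a set \<Rightarrow> 'a set" where
  "irr \<S> S = {s\<in>S. s \<notin> \<Union>(\<S> - {S})}"

definition irredundant :: "'a set set \<Rightarrow> bool" where
  "irredundant \<S> \<longleftrightarrow> (\<forall>S\<in>\<S>. irr \<S> S \<noteq> {})"

definition is_B_choice :: "nat set set \<Rightarrow> nat \<Rightarrow> nat set set \<Rightarrow> bool" where
  "is_B_choice \<A> n \<B> \<longleftrightarrow>
     (let \<S> = small_members \<A> (real n / 2) in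
       \<B> \<subseteq> \<S> \<and> irredundant \<B> \<and> \<Union>\<B> = \<Union>\<S> \<and>
       (\<forall>\<B>'. \<B>' \<subseteq> \<S> \<and> irredundant \<B>' \<and> \<Union>\<B>' = \<Union>\<S> \<longrightarrow> card \<B> \<le> card \<B>'))"

end

theory Submission
  imports Defs
begin

lemma uc_Union_mem:
  assumes "union_closed \<A>"
  shows "\<Union>\<A> \<in> \<A>"
proof -
  have fin: "finite \<A>" and ne: "\<A> \<noteq> {}" and cl: "\<forall>X\<in>\<A>. \<forall>Y\<in>\<A>. X \<union> Y \<in> \<A>"
    using assms unfolding union_closed_def by auto
  have "\<And>S. finite S \<Longrightarrow> S \<subseteq> \<A> \<Longrightarrow> S \<noteq> {} \<Longrightarrow> \<Union>S \<in> \<A>"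
  proof -
    fix S :: "'a set set"
    assume "finite S" "S \<subseteq> \<A>" "S \<noteq> {}"
    then show "\<Union>S \<in> \<A>"
    proof (induction S rule: finite_induct)
      case empty then show ?case by simp
    next
      case (insert x F)
      show ?case
      proof (cases "F = {}")
        case True then show ?thesis using insert by simp
      next
        case False then show ?thesis using insert cl by simp
      qed
    qed
  qed
  then show ?thesis using fin ne by blast
qed

lemma height_ge:
  assumes "finite \<A>" "\<C> \<subseteq> \<A>" "is_chain \<C>"
  shows "card \<C> \<le> height \<A>"
  unfolding height_def
proof (rule Max_ge)
  show "finite (card ` {\<C>. \<C> \<subseteq> \<A> \<and> is_chain \<C>})"
    using assms(1) by simp
  show "card \<C> \<in> card ` {\<C>. \<C> \<subseteq> \<A> \<and> is_chain \<C>}" using assms by blast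
qed

lemma irr_in: "s \<in> irr S X \<Longrightarrow> s \<in> X" unfolding irr_def by auto
lemma irr_notin: "s \<in> irr S X \<Longrightarrow> Y \<in> S \<Longrightarrow> Y \<noteq> X \<Longrightarrow> s \<notin> Y"
  unfolding irr_def by auto

lemma key:
  assumes uc: "union_closed \<A>" and h: "height \<A> = 4"
    and BA: "\<B> \<subseteq> \<A>" and irrd: "irredundant \<B>"
    and Beq: "\<B> = {B1, B2, B3, B4}"
    and d: "B1 \<noteq> B2" "B1 \<noteq> B3" "B1 \<noteq> B4" "B2 \<noteq> B3" "B2 \<noteq> B4" "B3 \<noteq> B4"
    and x: "x \<in> irr \<B> B1" and y: "y \<in> irr \<B> B1"
    and A: "A \<in> \<A>" "x \<in> A" "y \<notin> A"
  shows False
proof -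
  have cl: "\<forall>X\<in>\<A>. \<forall>Y\<in>\<A>. X \<union> Y \<in> \<A>" and fin: "finite \<A>"
    using uc unfolding union_closed_def by auto
  have inB: "B1 \<in> \<B>" "B2 \<in> \<B>" "B3 \<in> \<B>" "B4 \<in> \<B>" by (simp_all add: Beq)
  obtain a3 where a3: "a3 \<in> irr \<B> B3" using irrd inB unfolding irredundant_def by blast
  obtain a4 where a4: "a4 \<in> irr \<B> B4" using irrd inB unfolding irredundant_def by blast
  define C1 where "C1 = B2"
  define C2 where "C2 = B2 \<union> B3"
  define C3 where "C3 = B2 \<union> B3 \<union> B4"
  define C4 where "C4 = B2 \<union> B3 \<union> B4 \<union> A"
  define C5 where "C5 = \<Union>\<A>"
  have mem: "B1 \<in> \<A>" "B2 \<in> \<A>" "B3 \<in> \<A>" "B4 \<in> \<A>" using BA inB by auto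
  have i1: "C1 \<in> \<A>" unfolding C1_def using mem by blast
  have i2: "C2 \<in> \<A>" unfolding C2_def using mem cl by blast
  have i3: "C3 \<in> \<A>" using i2 mem cl unfolding C3_def C2_def by blast
  have i4: "C4 \<in> \<A>" using i3 A(1) cl unfolding C4_def C3_def by blast
  have i5: "C5 \<in> \<A>" unfolding C5_def by (rule uc_Union_mem[OF uc])
  note inA = i1 i2 i3 i4 i5
  have a3': "a3 \<in> B3" "a3 \<notin> B2" using irr_in[OF a3] irr_notin[OF a3, of B2] d inB by auto
  have a4': "a4 \<in> B4" "a4 \<notin> B2" "a4 \<notin> B3" using irr_in[OF a4] irr_notin[OF a4, of B2] irr_notin[OF a4, of B3] d inB by auto
  have x': "x \<notin> B2" "x \<notin> B3" "x \<notin> B4" using irr_notin[OF x, of B2] irr_notin[OF x, of B3] irr_notin[OF x, of B4] d inB by auto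
  have y': "y \<in> B1" "y \<notin> B2" "y \<notin> B3" "y \<notin> B4" using irr_in[OF y] irr_notin[OF y, of B2] irr_notin[OF y, of B3] irr_notin[OF y, of B4] d inB by auto
  have s1: "C1 \<subset> C2" unfolding C1_def C2_def using a3' by auto
  have s2: "C2 \<subset> C3" unfolding C2_def C3_def using a4' by auto
  have s3: "C3 \<subset> C4" unfolding C3_def C4_def using x' A by auto
  have s4: "C4 \<subset> C5" unfolding C4_def C5_def using y' A mem by auto
  have s13: "C1 \<subset> C3" using s1 s2 by (rule psubset_trans)
  have s14: "C1 \<subset> C4" using s13 s3 by (rule psubset_trans)
  have s15: "C1 \<subset> C5" using s14 s4 by (rule psubset_trans)
  have s24: "C2 \<subset> C4" using s2 s3 by (rule psubset_trans)
  have s25: "C2 \<subset> C5" using s24 s4 by (rule psubset_trans)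
  have s35: "C3 \<subset> C5" using s3 s4 by (rule psubset_trans)
  note ss = s1 s2 s3 s4 s13 s14 s15 s24 s25 s35
  have ch: "is_chain {C1, C2, C3, C4, C5}"
    unfolding is_chain_def by (simp add: ss)
  have "C1 \<noteq> C2" "C1 \<noteq> C3" "C1 \<noteq> C4" "C1 \<noteq> C5" "C2 \<noteq> C3" "C2 \<noteq> C4" "C2 \<noteq> C5"
    "C3 \<noteq> C4" "C3 \<noteq> C5" "C4 \<noteq> C5" using ss by auto
  then have "card {C1, C2, C3, C4, C5} = 5" by simp
  moreover have "card {C1, C2, C3, C4, C5} \<le> height \<A>"
    by (rule height_ge[OF fin _ ch]) (use inA in auto)
  ultimately show False using h by simp
qed

theorem propositionK:
  fixes \<A> \<B> :: "nat set set" and n :: nat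
  assumes "union_closed \<A>" and "separating \<A>" and "\<Union>\<A> = {1..n}"
    and "height \<A> = 4"
    and "is_B_choice \<A> n \<B>" and "card \<B> = 4"
  shows "\<forall>B\<in>\<B>. card (irr \<B> B) = 1"
proof
  fix B1 assume B1: "B1 \<in> \<B>"
  have BS: "\<B> \<subseteq> small_members \<A> (real n / 2)"
    using assms(5) unfolding is_B_choice_def Let_def by (rule conjunct1)
  have irrd: "irredundant \<B>"
    using assms(5) unfolding is_B_choice_def Let_def by (rule conjunct1[OF conjunct2])
  have "small_members \<A> (real n / 2) \<subseteq> \<A>" unfolding small_members_def by blast
  then have BA: "\<B> \<subseteq> \<A>" using BS by (rule_tac subset_trans)
  have finA: "finite \<A>" and finX: "\<forall>X\<in>\<A>. finite X"
    using assms(1) unfolding union_closed_def by auto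
  have "card (\<B> - {B1}) = 3" using B1 assms(6) by (simp add: card_Diff_singleton)
  then have "\<exists>x y z. \<B> - {B1} = {x, y, z} \<and> x \<noteq> y \<and> y \<noteq> z \<and> x \<noteq> z"
    by (simp only: card_3_iff)
  then obtain B2 B3 B4 where b: "\<B> - {B1} = {B2, B3, B4}" "B2 \<noteq> B3" "B3 \<noteq> B4" "B2 \<noteq> B4"
    by (elim exE conjE) (rule that, assumption+)
  have "\<B> = insert B1 (\<B> - {B1})" using B1 by (rule insert_Diff[symmetric])
  also have "\<dots> = {B1, B2, B3, B4}" by (simp only: b(1))
  finally have Beq: "\<B> = {B1, B2, B3, B4}" .
  have "B2 \<in> \<B> - {B1}" "B3 \<in> \<B> - {B1}" "B4 \<in> \<B> - {B1}" by (simp_all only: b(1) insert_iff simp_thms)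
  then have d: "B1 \<noteq> B2" "B1 \<noteq> B3" "B1 \<noteq> B4" by auto
  have "finite B1" using finX BA B1 by blast
  moreover have "irr \<B> B1 \<subseteq> B1" unfolding irr_def by (rule subsetI) (erule CollectE, erule conjE)
  ultimately have fin: "finite (irr \<B> B1)" using finite_subset by metis
  have ne: "irr \<B> B1 \<noteq> {}" using irrd B1 unfolding irredundant_def by auto
  have "\<not> (\<exists>x y. x \<in> irr \<B> B1 \<and> y \<in> irr \<B> B1 \<and> x \<noteq> y)"
  proof
    assume "\<exists>x y. x \<in> irr \<B> B1 \<and> y \<in> irr \<B> B1 \<and> x \<noteq> y"
    then obtain x y where xy: "x \<in> irr \<B> B1" "y \<in> irr \<B> B1" "x \<noteq> y" by blast
    have "x \<in> \<Union>\<A>" "y \<in> \<Union>\<A>" using xy BA B1 unfolding irr_def by auto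
    then obtain A where A: "A \<in> \<A>" "(x \<in> A \<and> y \<notin> A) \<or> (y \<in> A \<and> x \<notin> A)"
      using assms(2) xy(3) unfolding separating_def by blast
    show False
    proof (cases "x \<in> A \<and> y \<notin> A")
      case True
      then show False using key[OF assms(1) assms(4) BA irrd Beq d b(2) b(4) b(3) xy(1) xy(2) A(1)] by blast
    next
      case False
      then have "y \<in> A \<and> x \<notin> A" using A by blast
      then show False using key[OF assms(1) assms(4) BA irrd Beq d b(2) b(4) b(3) xy(2) xy(1) A(1)] by blast
    qed
  qed
  moreover obtain z where z: "z \<in> irr \<B> B1" using ne by blast
  ultimately have "irr \<B> B1 = {z}" by blast
  then show "card (irr \<B> B1) = 1" by simp
qed

end
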